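(* Consider the following two-player game between a random player $\mathfrak{R}$ and a deterministic player $\mathfrak{D}$. Initially there is a pile of $n \geq 1$ elements. The players alternate turns, with $\mathfrak{R}$ moving first. On each turn of $\mathfrak{R}$, if the pile currently contains exactly $m$ elements, $\mathfrak{R}$ removes $k$ elements, where $k$ is chosen uniformly at random from $\{1, \ldots, m\}$, independently of all previous choices. On each turn of $\mathfrak{D}$, $\mathfrak{D}$ removes exactly one element. The player who removes the last element (so that the pile is empty at the end of its turn) wins. Let $D_n$ denote the probability that $\mathfrak{D}$ wins when the game starts with $n$ elements. Then for every $n \geq 1$, $$D_n = \sum_{k=0}^{n}\frac{(-1)^k}{k!} = \frac{d_n}{n!},$$ where $d_n$ is the number of derangements (fixed-point-free permutations) of an $n$-element set. In particular, $\lim_{n\to\infty} D_n = e^{-1}$. *)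

theory Defs
  imports "HOL-Analysis.Analysis" "HOL-Probability.Probability"
begin

text \<open>The result is a distribution on booleans: True means that the deterministic
  player D wins.\<close>

fun game :: "nat \<Rightarrow> bool pmf" where
  "game 0 = return_pmf False"
| "game (Suc m) =
     pmf_of_set {1..Suc m} \<bind>
       (\<lambda>k. if k = Suc m then return_pmf False
            else if Suc m - k = 1 then return_pmf True
            else game (Suc m - k - 1))"

definition D_win :: "nat \<Rightarrow> real" where
  "D_win n = pmf (game n) True"

definition derangements :: "nat \<Rightarrow> nat" where
  "derangements n = card {p. p permutes {1..n} \<and> (\<forall>x\<in>{1..n}. p x \<noteq> x)}"

end

theory Submission
  imports Defs
begin

definition E :: "nat \<Rightarrow> real" where "E j = (if j = 0 then 1 else D_win j)"

lemma D_rec: "D_win (Suc m) = (\<Sum>j<m. E j) / real (Suc m)"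
proof -
  have "D_win (Suc m) = (\<Sum>k\<in>{1..Suc m}. pmf (if k = Suc m then return_pmf False
            else if Suc m - k = 1 then return_pmf True
            else game (Suc m - k - 1)) True) / real (Suc m)"
    unfolding D_win_def by (simp add: pmf_bind_pmf_of_set)
  also have "(\<Sum>k\<in>{1..Suc m}. pmf (if k = Suc m then return_pmf False
            else if Suc m - k = 1 then return_pmf True
            else game (Suc m - k - 1)) True) = (\<Sum>k\<in>{1..Suc m}. if k = Suc m then 0 else E (m - k))"
  proof (rule sum.cong[OF refl])
    fix k assume "k \<in> {1..Suc m}"
    then show "pmf (if k = Suc m then return_pmf False
            else if Suc m - k = 1 then return_pmf True
            else game (Suc m - k - 1)) True = (if k = Suc m then 0 else E (m - k))"
      by (auto simp: E_def D_win_def Suc_diff_le)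
  qed
  also have "\<dots> = (\<Sum>k\<in>{1..m}. E (m - k))"
    by (simp add: sum.atLeast1_atMost_eq sum.atLeast_Suc_atMost)
  also have "\<dots> = (\<Sum>j<m. E j)"
    by (rule sum.reindex_bij_witness[where i="\<lambda>j. m - j" and j="\<lambda>k. m - k"]) auto
  finally show ?thesis .
qed

definition S :: "nat \<Rightarrow> real" where "S n = (\<Sum>k=0..n. (-1) ^ k / fact k)"

lemma S_rec: "real (Suc m) * S (Suc m) = (\<Sum>j<m. S j)"
proof (induction m)
  case 0 then show ?case by (simp add: S_def)
next
  case (Suc m)
  have a: "S (Suc (Suc m)) = S (Suc m) + (-1)^(Suc (Suc m)) / fact (Suc (Suc m))"
    by (simp add: S_def)
  have b: "S (Suc m) = S m + (-1)^(Suc m) / fact (Suc m)"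
    by (simp add: S_def)
  have c: "real (Suc (Suc m)) * ((-1)^(Suc (Suc m)) / fact (Suc (Suc m))) = (-1)^m / fact (Suc m)"
  proof -
    have f: "fact (Suc (Suc m)) = real (Suc (Suc m)) * (fact (Suc m) :: real)"
      by (rule fact_Suc)
    show ?thesis unfolding f by (simp del: fact_Suc of_nat_Suc)
  qed
  have "real (Suc (Suc m)) * S (Suc (Suc m)) = real (Suc (Suc m)) * S (Suc m) + (-1)^m / fact (Suc m)"
    using a c by (simp add: distrib_left)
  also have "\<dots> = real (Suc m) * S (Suc m) + S (Suc m) + (-1)^m / fact (Suc m)"
    by (simp add: algebra_simps)
  also have "\<dots> = (\<Sum>j<m. S j) + S m" using Suc b by simp
  finally show ?case by simp
qed

lemma E_S: "E n = S n"
proof (induction n rule: less_induct)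
  case (less n)
  show ?case
  proof (cases n)
    case 0 then show ?thesis by (simp add: E_def S_def)
  next
    case (Suc m)
    have "E n = (\<Sum>j<m. E j) / real (Suc m)" using Suc D_rec by (simp add: E_def)
    also have "\<dots> = (\<Sum>j<m. S j) / real (Suc m)" using less Suc by simp
    also have "\<dots> = S n" using S_rec[of m] Suc by (simp add: field_simps)
    finally show ?thesis .
  qed
qed

lemma perm_fix:
  assumes "B \<subseteq> A"
  shows "{p. p permutes A \<and> (\<forall>i\<in>B. p i = i)} = {p. p permutes (A - B)}"
proof (intro set_eqI iffI)
  fix p assume "p \<in> {p. p permutes A \<and> (\<forall>i\<in>B. p i = i)}"
  then show "p \<in> {p. p permutes (A - B)}" by (auto simp: permutes_def)
next
  fix p assume "p \<in> {p. p permutes (A - B)}"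
  then have "p permutes (A - B)" by simp
  moreover have "p permutes A" using permutes_subset[OF calculation] by blast
  ultimately show "p \<in> {p. p permutes A \<and> (\<forall>i\<in>B. p i = i)}"
    using permutes_not_in by fastforce
qed

lemma derange: "real (derangements n) = (\<Sum>k=0..n. (-1) ^ k / fact k) * fact n"
proof -
  define A where "A = {1..n}"
  define P where "P = {p. p permutes A}"
  define G where "G i = {p. p permutes A \<and> p i = i}" for i
  have finA: "finite A" and cA: "card A = n" by (auto simp: A_def)
  have finP: "finite P" unfolding P_def by (rule finite_permutations[OF finA])
  have cP: "card P = fact n" unfolding P_def by (rule card_permutations[OF cA finA])
  have Der: "{p. p permutes {1..n} \<and> (\<forall>x\<in>{1..n}. p x \<noteq> x)} = P - (\<Union>(G ` A))"
    by (auto simp: A_def P_def G_def)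
  have sub: "\<Union>(G ` A) \<subseteq> P" by (auto simp: P_def G_def)
  define f where "f X = real (card (X \<inter> P))" for X
  have add: "f (X \<union> Y) = f X + f Y" if "disjnt X Y" for X Y
  proof -
    have "(X \<union> Y) \<inter> P = (X \<inter> P) \<union> (Y \<inter> P)" by blast
    moreover have "card ((X \<inter> P) \<union> (Y \<inter> P)) = card (X \<inter> P) + card (Y \<inter> P)"
      by (rule card_Un_disjoint) (use finP that in \<open>auto simp: disjnt_def\<close>)
    ultimately show ?thesis by (simp add: f_def)
  qed
  have IE: "f (\<Union>(G ` A)) = (\<Sum>B | B \<subseteq> A \<and> B \<noteq> {}. (-1) ^ (card B + 1) * f (\<Inter>(G ` B)))"
    by (rule Incl_Excl_UN[OF add finA])
  have fI: "f (\<Inter>(G ` B)) = fact (n - card B)" if "B \<subseteq> A" "B \<noteq> {}" for B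
  proof -
    have "\<Inter>(G ` B) \<inter> P = {p. p permutes A \<and> (\<forall>i\<in>B. p i = i)}"
      using that by (auto simp: G_def P_def)
    also have "\<dots> = {p. p permutes (A - B)}" by (rule perm_fix[OF that(1)])
    finally have "card (\<Inter>(G ` B) \<inter> P) = fact (card (A - B))"
      using card_permutations[OF refl, of "A - B"] finA by simp
    moreover have "card (A - B) = n - card B"
      using that finA cA by (simp add: card_Diff_subset finite_subset)
    ultimately show ?thesis by (simp add: f_def)
  qed
  have finPow: "finite (Pow A)" using finA by simp
  have "real (derangements n) = real (card P) - f (\<Union>(G ` A))"
    unfolding derangements_def Der f_def using sub finP
    by (simp add: card_Diff_subset finite_subset Int_absorb2 of_nat_diff card_mono)
  also have "\<dots> = fact n + (\<Sum>B | B \<subseteq> A \<and> B \<noteq> {}. (-1) ^ card B * fact (n - card B))"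
    unfolding IE cP by (simp add: fI sum_negf[symmetric])
  also have "\<dots> = (\<Sum>B\<in>Pow A. (-1) ^ card B * fact (n - card B))"
  proof -
    have "Pow A = insert {} {B. B \<subseteq> A \<and> B \<noteq> {}}" by auto
    moreover have "finite {B. B \<subseteq> A \<and> B \<noteq> {}}" using finA by simp
    ultimately show ?thesis by simp
  qed
  also have "\<dots> = (\<Sum>k=0..n. \<Sum>B\<in>{B. B \<in> Pow A \<and> card B = k}. (-1) ^ card B * fact (n - card B))"
    by (rule sum.group[symmetric, OF finPow]) (use finA cA card_mono in auto)
  also have "\<dots> = (\<Sum>k=0..n. real (n choose k) * ((-1) ^ k * fact (n - k)))"
  proof (rule sum.cong[OF refl])
    fix k
    have "card {B. B \<in> Pow A \<and> card B = k} = n choose k"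
      using n_subsets[OF finA, of k] cA by simp
    then show "(\<Sum>B\<in>{B. B \<in> Pow A \<and> card B = k}. (-1) ^ card B * fact (n - card B)) =
        real (n choose k) * ((-1) ^ k * fact (n - k))"
      by simp
  qed
  also have "\<dots> = (\<Sum>k=0..n. (-1) ^ k / fact k * fact n)"
  proof (rule sum.cong[OF refl])
    fix k assume "k \<in> {0..n}"
    then have "fact k * fact (n - k) * real (n choose k) = fact n"
      using binomial_fact_lemma[of k n] by (metis atLeastAtMost_iff of_nat_fact of_nat_mult)
    then show "real (n choose k) * ((-1) ^ k * fact (n - k)) = (-1) ^ k / fact k * fact n"
      by (simp add: field_simps)
  qed
  finally show ?thesis by (simp add: sum_distrib_right)
qed

theorem mainTheorem1:
  shows "(\<forall>n\<ge>1. D_win n = (\<Sum>k=0..n. (-1) ^ k / fact k)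
                 \<and> (\<Sum>k=0..n. (-1) ^ k / fact k) = real (derangements n) / fact n)
         \<and> D_win \<longlonglongrightarrow> exp (-1)"
proof (intro conjI allI impI)
  fix n :: nat assume n: "n \<ge> 1"
  show "D_win n = (\<Sum>k=0..n. (-1) ^ k / fact k)"
    using E_S[of n] n by (simp add: E_def S_def)
  show "(\<Sum>k=0..n. (-1) ^ k / fact k) = real (derangements n) / fact n"
    by (simp add: derange)
next
  have "(\<lambda>n. (-1::real)^n / fact n) sums exp (-1)"
    using exp_converges[of "-1::real"] by (simp add: divide_inverse mult.commute)
  then have "(\<lambda>n. \<Sum>k<n. (-1::real)^k / fact k) \<longlonglongrightarrow> exp (-1)"
    by (simp add: sums_def)
  then have "(\<lambda>n. \<Sum>k<Suc n. (-1::real)^k / fact k) \<longlonglongrightarrow> exp (-1)"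
    by (rule LIMSEQ_Suc)
  moreover have "\<forall>\<^sub>F n in sequentially. (\<Sum>k<Suc n. (-1::real)^k / fact k) = D_win n"
    unfolding eventually_sequentially
  proof (intro exI allI impI)
    fix n :: nat assume "n \<ge> 1"
    then show "(\<Sum>k<Suc n. (-1::real)^k / fact k) = D_win n"
      using E_S[of n] by (simp add: E_def S_def atLeast0AtMost lessThan_Suc_atMost)
  qed
  ultimately show "D_win \<longlonglongrightarrow> exp (-1)"
    by (rule Lim_transform_eventually)
qed

end
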